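(* Let $p$ be a distinguished homogeneous quadratic vector field on $\mathbb{C}^3$ with parameters satisfying $\gamma_{13}=\gamma_{21}=\gamma_{32}=0$, and with the remaining six parameters $\gamma_{11},\gamma_{12},\gamma_{22},\gamma_{23},\gamma_{31},\gamma_{33}$ algebraically independent over $\mathbb{Q}$. Then each coordinate function $x_i$, $1\le i\le3$, is a semi-invariant of $p$, and $p$ satisfies property E.
   Context: A homogeneous quadratic map $p:\mathbb{C}^3\to\mathbb{C}^3$ has an idempotent $v$ if $p(v)=v\ne0$. $p$ is distinguished if (i) $e_1,e_2,e_3$ are idempotents; (ii) there are three further idempotents $v_i=\gamma_{i1}e_1+\gamma_{i2}e_2+\gamma_{i3}e_3$, $i=1,2,3$; (iii) the matrix with rows $(\gamma_{i1}\gamma_{i2},\gamma_{i2}\gamma_{i3},\gamma_{i3}\gamma_{i1})$, $i=1,2,3$, is invertible. A semi-invariant of $p$ is a nonconstant polynomial $\psi$ with $X_p(\psi)=\lambda\psi$ for a polynomial $\lambda$, $X_p=\sum p_i\partial/\partial x_i$. Poincaré transform at $v\ne0$: choose regular $T$ with $Tv=e_1$, put $F=T\circ p\circ T^{-1}$, $G_i(x_1,\dots,x_4)=F_i(x_1,x_2,x_3)$ (homogeneous of degree 2), and let $p_v^*(x_2,x_3,x_4)$ have components $-G_1x_2+G_2$, $-G_1x_3+G_3$, $-G_1x_4$ evaluated at $(1,x_2,x_3,x_4)$. Property E: for every $v\ne0$ with $p(v)\in\mathbb{C}v$, the eigenvalues $\lambda_1,\lambda_2,\lambda_3$ of $Dp_v^*(0)$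 are linearly independent over $\mathbb{Q}$, or satisfy $\dim_{\mathbb{Q}}(\sum\mathbb{Q}\lambda_i)=2$ together with $\sum m_i\lambda_i=0$ for some positive integers $m_i$. *)

theory Defs
  imports "HOL-Analysis.Analysis" "HOL-Library.Numeral_Type"
begin

type_synonym cvec = "complex ^ 3"

definition hom_quadratic :: "(cvec \<Rightarrow> cvec) \<Rightarrow> bool" where
  "hom_quadratic p \<longleftrightarrow> (\<exists>c :: 3 \<Rightarrow> 3 \<Rightarrow> 3 \<Rightarrow> complex.
      \<forall>x i. p x $ i = (\<Sum>j\<in>UNIV. \<Sum>k\<in>UNIV. c i j k * x $ j * x $ k))"

definition idempotent :: "(cvec \<Rightarrow> cvec) \<Rightarrow> cvec \<Rightarrow> bool" where
  "idempotent p v \<longleftrightarrow> p v = v \<and> v \<noteq> 0"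

definition e :: "3 \<Rightarrow> cvec" where
  "e i = axis i 1"

text \<open>Distinguished, with parameter matrix g (row i = coordinates of v_i).\<close>
definition distinguished :: "(cvec \<Rightarrow> cvec) \<Rightarrow> complex^3^3 \<Rightarrow> bool" where
  "distinguished p g \<longleftrightarrow> hom_quadratic p
     \<and> (\<forall>i. idempotent p (e i))
     \<and> (\<forall>i. idempotent p (g $ i))
     \<and> (\<forall>i j. g $ i \<noteq> e j)
     \<and> (\<forall>i j. i \<noteq> j \<longrightarrow> g $ i \<noteq> g $ j)
     \<and> invertible ((\<chi> i. vector [g$i$1 * g$i$2, g$i$2 * g$i$3, g$i$3 * g$i$1]) :: complex^3^3)"

inductive_set polyfun :: "(cvec \<Rightarrow> complex) set" where
  const: "(\<lambda>x. c) \<in> polyfun"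
| coord: "(\<lambda>x. x $ i) \<in> polyfun"
| add: "f \<in> polyfun \<Longrightarrow> g \<in> polyfun \<Longrightarrow> (\<lambda>x. f x + g x) \<in> polyfun"
| mult: "f \<in> polyfun \<Longrightarrow> g \<in> polyfun \<Longrightarrow> (\<lambda>x. f x * g x) \<in> polyfun"

definition lie_deriv :: "(cvec \<Rightarrow> cvec) \<Rightarrow> (cvec \<Rightarrow> complex) \<Rightarrow> cvec \<Rightarrow> complex" where
  "lie_deriv p \<psi> x = frechet_derivative \<psi> (at x) (p x)"

definition semi_invariant :: "(cvec \<Rightarrow> cvec) \<Rightarrow> (cvec \<Rightarrow> complex) \<Rightarrow> bool" where
  "semi_invariant p \<psi> \<longleftrightarrow> \<psi> \<in> polyfun \<and> (\<exists>x y. \<psi> x \<noteq> \<psi> y)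
     \<and> (\<exists>lam\<in>polyfun. \<forall>x. lie_deriv p \<psi> x = lam x * \<psi> x)"

text \<open>Poincare transform p*_v built with the regular matrix T (T v = e_1).\<close>
definition poincare :: "(cvec \<Rightarrow> cvec) \<Rightarrow> complex^3^3 \<Rightarrow> cvec \<Rightarrow> cvec" where
  "poincare p T y =
     (let F = (\<lambda>x. T *v p (matrix_inv T *v x));
          f = F (vector [1, y$1, y$2])
      in vector [- (f$1) * y$1 + f$2, - (f$1) * y$2 + f$3, - (f$1) * y$3])"

definition eigenvalues3 :: "complex^3^3 \<Rightarrow> complex \<Rightarrow> complex \<Rightarrow> complex \<Rightarrow> bool" where
  "eigenvalues3 A l1 l2 l3 \<longleftrightarrow> (\<forall>t. det (mat t - A) = (t - l1) * (t - l2) * (t - l3))"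

definition Q_indep :: "complex list \<Rightarrow> bool" where
  "Q_indep l \<longleftrightarrow> (\<forall>q :: rat list. length q = length l \<and>
      (\<Sum>i<length l. of_rat (q!i) * l!i) = 0 \<longrightarrow> (\<forall>i<length l. q!i = 0))"

text \<open>dim_Q (Q l1 + Q l2 + Q l3) = 2.\<close>
definition Q_dim2 :: "complex \<Rightarrow> complex \<Rightarrow> complex \<Rightarrow> bool" where
  "Q_dim2 l1 l2 l3 \<longleftrightarrow> \<not> Q_indep [l1, l2, l3]
     \<and> (Q_indep [l1, l2] \<or> Q_indep [l2, l3] \<or> Q_indep [l1, l3])"

definition property_E :: "(cvec \<Rightarrow> cvec) \<Rightarrow> bool" where
  "property_E p \<longleftrightarrow> (\<forall>v T l1 l2 l3. v \<noteq> 0 \<and> (\<exists>c. p v = c *s v)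
      \<and> invertible T \<and> T *v v = e 1
      \<and> eigenvalues3 (matrix (frechet_derivative (poincare p T) (at 0))) l1 l2 l3
      \<longrightarrow> Q_indep [l1, l2, l3]
        \<or> (Q_dim2 l1 l2 l3 \<and> (\<exists>m1 m2 m3 :: nat. m1 > 0 \<and> m2 > 0 \<and> m3 > 0
              \<and> of_nat m1 * l1 + of_nat m2 * l2 + of_nat m3 * l3 = 0)))"

definition alg_indep :: "nat \<Rightarrow> (nat \<Rightarrow> complex) \<Rightarrow> bool" where
  "alg_indep n z \<longleftrightarrow> (\<forall>S (c :: (nat \<Rightarrow> nat) \<Rightarrow> rat).
      finite S \<and> S \<subseteq> {\<alpha>. \<forall>i\<ge>n. \<alpha> i = 0}
      \<and> (\<Sum>\<alpha>\<in>S. of_rat (c \<alpha>) * (\<Prod>i<n. z i ^ \<alpha> i)) = 0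
      \<longrightarrow> (\<forall>\<alpha>\<in>S. c \<alpha> = 0))"

end

theory Submission
  imports Defs
begin

inductive_set rp :: "((nat \<Rightarrow> complex) \<Rightarrow> complex) set" where
  rp_const: "(\<lambda>x. of_rat r) \<in> rp"
| rp_var: "i < 6 \<Longrightarrow> (\<lambda>x. x i) \<in> rp"
| rp_add: "f \<in> rp \<Longrightarrow> g \<in> rp \<Longrightarrow> (\<lambda>x. f x + g x) \<in> rp"
| rp_mult: "f \<in> rp \<Longrightarrow> g \<in> rp \<Longrightarrow> (\<lambda>x. f x * g x) \<in> rp"

definition mono6 :: "(nat \<Rightarrow> nat) \<Rightarrow> (nat \<Rightarrow> complex) \<Rightarrow> complex" where
  "mono6 a x = (\<Prod>i<6. x i ^ a i)"

definition evl :: "(rat \<times> (nat \<Rightarrow> nat)) list \<Rightarrow> (nat \<Rightarrow> complex) \<Rightarrow> complex" where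
  "evl ms x = (\<Sum>m\<leftarrow>ms. of_rat (fst m) * mono6 (snd m) x)"

definition coef :: "(rat \<times> (nat \<Rightarrow> nat)) list \<Rightarrow> (nat \<Rightarrow> nat) \<Rightarrow> rat" where
  "coef ms a = (\<Sum>m\<leftarrow>ms. if snd m = a then fst m else 0)"

lemma coef_notin: "a \<notin> set (map snd ms) \<Longrightarrow> coef ms a = 0"
  unfolding coef_def by (induction ms) auto

lemma evl_group: "evl ms x = (\<Sum>a\<in>set (map snd ms). of_rat (coef ms a) * mono6 a x)"
proof (induction ms)
  case Nil
  then show ?case by (simp add: evl_def)
next
  case (Cons m ms)
  obtain c b where m: "m = (c, b)" by (cases m)
  let ?S = "set (map snd ms)"
  have cf: "coef (m # ms) a = (if b = a then c else 0) + coef ms a" for a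
    by (simp add: coef_def m)
  have "(\<Sum>a\<in>insert b ?S. of_rat (coef (m # ms) a) * mono6 a x)
     = (\<Sum>a\<in>insert b ?S. of_rat (if b = a then c else 0) * mono6 a x)
       + (\<Sum>a\<in>insert b ?S. of_rat (coef ms a) * mono6 a x)"
    by (simp add: cf of_rat_add distrib_right sum.distrib)
  also have "(\<Sum>a\<in>insert b ?S. of_rat (if b = a then c else 0) * mono6 a x) = of_rat c * mono6 b x"
  proof -
    have "(\<Sum>a\<in>insert b ?S. of_rat (if b = a then c else 0) * mono6 a x)
        = (\<Sum>a\<in>insert b ?S. if b = a then of_rat c * mono6 a x else 0)"
      by (rule sum.cong) auto
    then show ?thesis by (simp add: sum.delta)
  qed
  also have "(\<Sum>a\<in>insert b ?S. of_rat (coef ms a) * mono6 a x) = evl ms x"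
  proof (cases "b \<in> ?S")
    case True
    then show ?thesis using Cons by (simp add: insert_absorb)
  next
    case False
    then show ?thesis using Cons by (simp add: coef_notin)
  qed
  finally show ?case by (simp add: evl_def m)
qed

lemma evl_zero_all:
  assumes ai: "alg_indep 6 z" and supp: "\<forall>m\<in>set ms. \<forall>i\<ge>6. snd m i = 0"
    and z0: "evl ms z = 0"
  shows "evl ms x = 0"
proof -
  have "\<forall>a\<in>set (map snd ms). coef ms a = 0"
    using ai unfolding alg_indep_def
    apply (elim allE[of _ "set (map snd ms)"] allE[of _ "coef ms"])
    using supp z0 by (auto simp: evl_group mono6_def)
  then show ?thesis by (auto simp: evl_group intro!: sum.neutral)
qed

lemma evl_append: "evl (ms1 @ ms2) x = evl ms1 x + evl ms2 x"
  by (simp add: evl_def)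

lemma mono6_add: "mono6 (\<lambda>i. a i + b i) x = mono6 a x * mono6 b x"
  by (simp add: mono6_def power_add prod.distrib)

definition mulms :: "(rat \<times> (nat \<Rightarrow> nat)) list \<Rightarrow> (rat \<times> (nat \<Rightarrow> nat)) list \<Rightarrow> (rat \<times> (nat \<Rightarrow> nat)) list" where
  "mulms ms1 ms2 = concat (map (\<lambda>m1. map (\<lambda>m2. (fst m1 * fst m2, \<lambda>i. snd m1 i + snd m2 i)) ms2) ms1)"

lemma evl_mulms: "evl (mulms ms1 ms2) x = evl ms1 x * evl ms2 x"
proof -
  have inner: "(\<Sum>m2\<leftarrow>ms2. of_rat (c * fst m2) * mono6 (\<lambda>i. a i + snd m2 i) x) = of_rat c * mono6 a x * evl ms2 x" for c a
    by (induction ms2) (auto simp: evl_def mono6_add of_rat_mult algebra_simps)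
  show ?thesis
    by (induction ms1) (auto simp: mulms_def evl_def inner[unfolded evl_def] o_def algebra_simps)
qed

lemma rp_evl: "f \<in> rp \<Longrightarrow> \<exists>ms. (\<forall>m\<in>set ms. \<forall>i\<ge>6. snd m i = 0) \<and> (\<forall>x. f x = evl ms x)"
proof (induction rule: rp.induct)
  case (rp_const r)
  show ?case
    by (rule exI[of _ "[(r, \<lambda>_. 0)]"]) (simp add: evl_def mono6_def)
next
  case (rp_var i)
  have "(\<Prod>j<6. x j ^ (if j = i then 1 else 0)) = x i" for x :: "nat \<Rightarrow> complex"
  proof -
    have "(\<Prod>j<6. x j ^ (if j = i then 1 else 0)) = (\<Prod>j<6. if j = i then x j else 1)"
      by (rule prod.cong) auto
    also have "\<dots> = x i" using rp_var by (simp add: prod.delta)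
    finally show ?thesis .
  qed
  then show ?case using rp_var
    by (intro exI[of _ "[(1, \<lambda>j. if j = i then 1 else 0)]"]) (auto simp: evl_def mono6_def)
next
  case (rp_add f g)
  then obtain ms1 ms2 where "\<forall>m\<in>set ms1. \<forall>i\<ge>6. snd m i = 0" "\<forall>x. f x = evl ms1 x"
     "\<forall>m\<in>set ms2. \<forall>i\<ge>6. snd m i = 0" "\<forall>x. g x = evl ms2 x" by blast
  then show ?case by (intro exI[of _ "ms1 @ ms2"]) (auto simp: evl_append)
next
  case (rp_mult f g)
  then obtain ms1 ms2 where "\<forall>m\<in>set ms1. \<forall>i\<ge>6. snd m i = 0" "\<forall>x. f x = evl ms1 x"
     "\<forall>m\<in>set ms2. \<forall>i\<ge>6. snd m i = 0" "\<forall>x. g x = evl ms2 x" by blast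
  then show ?case
    apply (intro exI[of _ "mulms ms1 ms2"] conjI)
     apply (force simp: mulms_def)
    by (simp add: evl_mulms)
qed

lemma rp_spec:
  assumes "alg_indep 6 z" "f \<in> rp" "f z = 0"
  shows "f x = 0"
  using rp_evl[OF assms(2)] evl_zero_all[OF assms(1)] assms(3) by metis

lemma rp_one: "(\<lambda>x. 1) \<in> rp" using rp_const[of 1] by simp
lemma rp_zero: "(\<lambda>x. 0) \<in> rp" using rp_const[of 0] by simp
lemma rp_num: "(\<lambda>x. numeral n) \<in> rp" using rp_const[of "numeral n"] by simp
lemma rp_neg: "f \<in> rp \<Longrightarrow> (\<lambda>x. - f x) \<in> rp"
  using rp_mult[OF rp_const[of "-1"], of f] by simp
lemma rp_diff: "f \<in> rp \<Longrightarrow> g \<in> rp \<Longrightarrow> (\<lambda>x. f x - g x) \<in> rp"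
  using rp_add[OF _ rp_neg, of f g] by simp
lemma rp_pow: "f \<in> rp \<Longrightarrow> (\<lambda>x. f x ^ n) \<in> rp"
  by (induction n) (auto intro: rp_one rp_mult)

lemmas rp_intros = rp_const rp_one rp_zero rp_num rp_var rp_add rp_mult rp_neg rp_diff rp_pow

lemma "(\<lambda>x. of_rat q * (1 - x 0) * x 5 - 2 * x 3 ^ 2) \<in> rp"
  by (intro rp_intros) auto

lemma Q_indep3: "Q_indep [a,b,c] \<longleftrightarrow>
  (\<forall>q0 q1 q2. of_rat q0 * a + of_rat q1 * b + of_rat q2 * c = 0 \<longrightarrow> q0 = 0 \<and> q1 = 0 \<and> q2 = 0)"
proof
  assume H: "Q_indep [a,b,c]"
  show "\<forall>q0 q1 q2. of_rat q0 * a + of_rat q1 * b + of_rat q2 * c = 0 \<longrightarrow> q0 = 0 \<and> q1 = 0 \<and> q2 = 0"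
  proof (intro allI impI)
    fix q0 q1 q2 assume "of_rat q0 * a + of_rat q1 * b + of_rat q2 * c = 0"
    then have "\<forall>i<3. [q0,q1,q2]!i = 0"
      using H unfolding Q_indep_def
      by (elim allE[of _ "[q0,q1,q2]"]) (simp add: eval_nat_numeral)
    then show "q0 = 0 \<and> q1 = 0 \<and> q2 = 0"
      by (metis nth_Cons_0 nth_Cons_Suc numeral_1_eq_Suc_0 One_nat_def zero_less_numeral
          Suc_lessD numeral_3_eq_3 lessI)
  qed
next
  assume H: "\<forall>q0 q1 q2. of_rat q0 * a + of_rat q1 * b + of_rat q2 * c = 0 \<longrightarrow> q0 = 0 \<and> q1 = 0 \<and> q2 = 0"
  show "Q_indep [a,b,c]"
    unfolding Q_indep_def
  proof (rule allI, rule impI)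
    fix q :: "rat list"
    assume A: "length q = length [a,b,c] \<and> (\<Sum>i<length [a,b,c]. of_rat (q!i) * [a,b,c]!i) = 0"
    then obtain q0 q1 q2 where q: "q = [q0,q1,q2]"
      by (auto simp: length_Suc_conv eval_nat_numeral)
    with A have "of_rat q0 * a + of_rat q1 * b + of_rat q2 * c = 0"
      by (simp add: eval_nat_numeral)
    with H have "q0 = 0 \<and> q1 = 0 \<and> q2 = 0" by blast
    then show "\<forall>i<length [a,b,c]. q!i = 0"
      by (auto simp: q less_Suc_eq eval_nat_numeral nth_Cons split: nat.splits)
  qed
qed

lemma Q_indep_swap12: "Q_indep [a,b,c] \<Longrightarrow> Q_indep [b,a,c]"
  unfolding Q_indep3 by (metis add.commute)
lemma Q_indep_swap23: "Q_indep [a,b,c] \<Longrightarrow> Q_indep [a,c,b]"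
  unfolding Q_indep3 by (metis add.assoc add.commute)

lemma Q_indep_scale: assumes "k \<noteq> 0" "Q_indep [a,b,c]" shows "Q_indep [k*a,k*b,k*c]"
  using assms unfolding Q_indep3
proof (intro allI impI)
  fix q0 q1 q2 assume H: "\<forall>q0 q1 q2. of_rat q0 * a + of_rat q1 * b + of_rat q2 * c = 0 \<longrightarrow> q0 = 0 \<and> q1 = 0 \<and> q2 = 0"
    and E: "of_rat q0 * (k*a) + of_rat q1 * (k*b) + of_rat q2 * (k*c) = 0"
  have "k * (of_rat q0 * a + of_rat q1 * b + of_rat q2 * c) = 0" using E by (simp add: algebra_simps)
  with assms(1) have "of_rat q0 * a + of_rat q1 * b + of_rat q2 * c = 0" by simp
  with H show "q0 = 0 \<and> q1 = 0 \<and> q2 = 0" by blast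
qed

lemma quad_roots:
  fixes l2 l3 m2 m3 :: complex
  assumes "l2 + l3 = m2 + m3" "l2 * l3 = m2 * m3"
  shows "(l2 = m2 \<and> l3 = m3) \<or> (l2 = m3 \<and> l3 = m2)"
proof -
  have "(l2 - m2) * (l2 - m3) = 0"
  proof -
    have "l3 = m2 + m3 - l2" using assms(1) by (simp add: algebra_simps)
    with assms(2) show ?thesis by (simp add: algebra_simps)
  qed
  then have "l2 = m2 \<or> l2 = m3" by simp
  then show ?thesis using assms(1) by auto
qed

lemma cubic_perm:
  fixes l1 l2 l3 m1 m2 m3 c :: complex
  assumes H: "\<And>t. t \<noteq> c \<Longrightarrow> (t-l1)*(t-l2)*(t-l3) = (t-m1)*(t-m2)*(t-m3)"
  and Q: "Q_indep [m1,m2,m3]"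
  shows "Q_indep [l1,l2,l3]"
proof -
  define E1 where "E1 = l1+l2+l3"
  define E2 where "E2 = l1*l2+l2*l3+l1*l3"
  define E3 where "E3 = l1*l2*l3"
  define F1 where "F1 = m1+m2+m3"
  define F2 where "F2 = m1*m2+m2*m3+m1*m3"
  define F3 where "F3 = m1*m2*m3"
  have ex: "(t-l1)*(t-l2)*(t-l3) = t^3 - E1*t^2 + E2*t - E3" for t
    by (simp add: E1_def E2_def E3_def algebra_simps power2_eq_square power3_eq_cube)
  have fx: "(t-m1)*(t-m2)*(t-m3) = t^3 - F1*t^2 + F2*t - F3" for t
    by (simp add: F1_def F2_def F3_def algebra_simps power2_eq_square power3_eq_cube)
  define a where "a = F1 - E1"
  define b where "b = E2 - F2"
  define d where "d = F3 - E3"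
  have z: "a*t^2 + b*t + d = 0" if "t \<noteq> c" for t
    using H[OF that] unfolding ex fx a_def b_def d_def by (simp add: algebra_simps)
  have z1: "a*(c+1)^2 + b*(c+1) + d = 0" by (rule z) simp
  have z2: "a*(c+2)^2 + b*(c+2) + d = 0" by (rule z) simp
  have z3: "a*(c+3)^2 + b*(c+3) + d = 0" by (rule z) simp
  have "2*a = 0" using z1 z2 z3 by (simp add: algebra_simps power2_eq_square) algebra
  then have a0: "a = 0" by simp
  then have "b*(c+2) + d - (b*(c+1) + d) = 0" using z1 z2 by simp
  then have "b = 0" by (simp add: algebra_simps)
  then have d0: "d = 0" using z1 a0 by simp
  have e1: "E1 = F1" using a0 a_def by simp
  have e2: "E2 = F2" using \<open>b = 0\<close> b_def by simp
  have e3: "E3 = F3" using d0 d_def by simp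
  have r1: "(l1-m1)*(l1-m2)*(l1-m3) = 0"
    using ex[of l1] fx[of l1] e1 e2 e3 by simp
  have Q12: "Q_indep [m2,m1,m3]" using Q_indep_swap12[OF Q] .
  have Q23: "Q_indep [m1,m3,m2]" using Q_indep_swap23[OF Q] .
  have Q231: "Q_indep [m2,m3,m1]" using Q_indep_swap23[OF Q12] .
  have Q312: "Q_indep [m3,m1,m2]" using Q_indep_swap12[OF Q23] .
  have Q321: "Q_indep [m3,m2,m1]" using Q_indep_swap23[OF Q312] .
  have s23: "l2 + l3 = E1 - l1" "l2 * l3 = E2 - l1 * (E1 - l1)"
    by (simp_all add: E1_def E2_def algebra_simps)
  have t1: "m2 + m3 = F1 - m1" "m2 * m3 = F2 - m1 * (F1 - m1)"
    by (simp_all add: F1_def F2_def algebra_simps)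
  have t2: "m1 + m3 = F1 - m2" "m1 * m3 = F2 - m2 * (F1 - m2)"
    by (simp_all add: F1_def F2_def algebra_simps)
  have t3: "m1 + m2 = F1 - m3" "m1 * m2 = F2 - m3 * (F1 - m3)"
    by (simp_all add: F1_def F2_def algebra_simps)
  from r1 have "l1 = m1 \<or> l1 = m2 \<or> l1 = m3" by simp
  then show ?thesis
  proof (elim disjE)
    assume h: "l1 = m1"
    have "(l2 = m2 \<and> l3 = m3) \<or> (l2 = m3 \<and> l3 = m2)"
      by (rule quad_roots) (simp_all only: s23 t1 e1 e2 h)
    then show ?thesis using Q Q23 h by auto
  next
    assume h: "l1 = m2"
    have "(l2 = m1 \<and> l3 = m3) \<or> (l2 = m3 \<and> l3 = m1)"
      by (rule quad_roots) (simp_all only: s23 t2 e1 e2 h)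
    then show ?thesis using Q12 Q231 h by auto
  next
    assume h: "l1 = m3"
    have "(l2 = m1 \<and> l3 = m2) \<or> (l2 = m2 \<and> l3 = m1)"
      by (rule quad_roots) (simp_all only: s23 t3 e1 e2 h)
    then show ?thesis using Q312 Q321 h by auto
  qed
qed

lemma vec_has_derivative:
  fixes f :: "'a::real_normed_vector \<Rightarrow> complex^'n"
  assumes "\<And>i. ((\<lambda>y. f y $ i) has_derivative (\<lambda>h. f' h $ i)) (at x)"
  shows "(f has_derivative f') (at x)"
proof -
  have "((\<lambda>y. f y \<bullet> b) has_derivative (\<lambda>h. f' h \<bullet> b)) (at x)" if "b \<in> Basis" for b
  proof -
    from that obtain i u where b: "b = axis i u" and u: "u \<in> Basis" unfolding Basis_vec_def by auto
    have "((\<lambda>y. (f y $ i) \<bullet> u) has_derivative (\<lambda>h. (f' h $ i) \<bullet> u)) (at x)"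
      by (rule bounded_linear.has_derivative[OF bounded_linear_inner_left assms])
    then show ?thesis by (simp add: b inner_axis)
  qed
  then show ?thesis
    using has_derivative_componentwise_within[of f f' x UNIV] by simp
qed

definition P0 :: "complex^3^3 \<Rightarrow> complex^3 \<Rightarrow> complex^3" where
  "P0 M x = (\<chi> i. x$i * (M *v x)$i)"

definition Jac :: "complex^3^3 \<Rightarrow> complex^3 \<Rightarrow> complex^3^3" where
  "Jac M x = (\<chi> i j. (if i = j then (M *v x)$i else 0) + x$i * M$i$j)"

lemma Jac_mult: "(Jac M x *v h) $ i = (M *v x)$i * h$i + x$i * (M *v h)$i"
  by (simp add: Jac_def matrix_vector_mult_def sum_3 exhaust_3 algebra_simps)
     (metis exhaust_3)

lemma P0_deriv: "(P0 M has_derivative (\<lambda>h. Jac M x *v h)) (at x)"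
proof (rule vec_has_derivative)
  fix i
  have l1: "((\<lambda>y. y $ i) has_derivative (\<lambda>h. h $ i)) (at x)"
    by (rule bounded_linear_imp_has_derivative) (rule bounded_linear_vec_nth)
  have l2: "((\<lambda>y. (M *v y) $ i) has_derivative (\<lambda>h. (M *v h) $ i)) (at x)"
    by (rule bounded_linear_imp_has_derivative)
       (rule bounded_linear_compose[OF bounded_linear_vec_nth matrix_vector_mul_bounded_linear])
  show "((\<lambda>y. P0 M y $ i) has_derivative (\<lambda>h. (Jac M x *v h) $ i)) (at x)"
    unfolding P0_def Jac_mult vec_lambda_beta
    by (rule has_derivative_eq_rhs[OF has_derivative_mult[OF l1 l2]]) (auto simp: algebra_simps)
qed

lemma matinv: assumes "invertible (T::complex^3^3)"
  shows "T ** matrix_inv T = mat 1" "matrix_inv T ** T = mat 1"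
proof -
  have "\<exists>A'. T ** A' = mat 1 \<and> A' ** T = mat 1" using assms unfolding invertible_def by blast
  then have "T ** matrix_inv T = mat 1 \<and> matrix_inv T ** T = mat 1"
    unfolding matrix_inv_def by (rule someI_ex)
  then show "T ** matrix_inv T = mat 1" "matrix_inv T ** T = mat 1" by auto
qed

lemma mat_mult_vec: "mat s *v (x::complex^3) = s *s x"
  by (simp add: vec_eq_iff mat_def matrix_vector_mult_def sum_3 forall_3)

lemma e1_vec: "e 1 = vector [1, 0, 0]"
  by (simp add: e_def vec_eq_iff forall_3 axis_def)

lemma mv_col: fixes B :: "complex^3^3"
  shows "(B *v vector [a,b,c]) $ k = B$k$1 * a + B$k$2 * b + B$k$3 * c"
  by (simp add: matrix_vector_mult_def sum_3)

lemma det_similar: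
  fixes T X :: "complex^3^3"
  assumes "invertible T"
  shows "det (mat s - T ** X ** matrix_inv T) = det (mat s - X)"
proof -
  let ?Ti = "matrix_inv T"
  have eq: "mat s - T ** X ** ?Ti = T ** (mat s - X) ** ?Ti"
    unfolding matrix_eq
  proof
    fix x :: "complex^3"
    have "(T ** (mat s - X) ** ?Ti) *v x = T *v (s *s (?Ti *v x) - X *v (?Ti *v x))"
      by (simp add: matrix_vector_mul_assoc[symmetric] matrix_vector_mult_diff_rdistrib mat_mult_vec)
    also have "\<dots> = s *s ((T ** ?Ti) *v x) - (T ** X ** ?Ti) *v x"
      by (simp add: matrix_vector_mult_diff_distrib vector_scalar_commute matrix_vector_mul_assoc matrix_mul_assoc)
    also have "\<dots> = (mat s - T ** X ** ?Ti) *v x"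
      by (simp add: matinv[OF assms] matrix_vector_mult_diff_rdistrib mat_mult_vec)
    finally show "(mat s - T ** X ** ?Ti) *v x = (T ** (mat s - X) ** ?Ti) *v x" by simp
  qed
  have "det T * det ?Ti = 1" using matinv[OF assms] det_mul[of T ?Ti] by simp
  then show ?thesis unfolding eq det_mul by (simp add: algebra_simps)
qed

lemma Jac_euler: "Jac M v *v v = 2 *s P0 M v"
  by (simp add: vec_eq_iff Jac_mult P0_def algebra_simps)

lemma charJ:
  fixes M T :: "complex^3^3" and v :: "complex^3"
  assumes p: "p = P0 M" and T: "invertible T" "T *v v = e 1" and pv: "p v = c *s v"
  shows "(t - c) * det (mat t - matrix (frechet_derivative (poincare p T) (at 0)))
       = (t + c) * det (mat (t + c) - Jac M v)"
proof -
  define Ti where "Ti = matrix_inv T"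
  have TTi: "T ** Ti = mat 1" "Ti ** T = mat 1" using matinv[OF T(1)] by (auto simp: Ti_def)
  have vTi: "Ti *v e 1 = v"
    using T(2) TTi by (metis matrix_vector_mul_assoc matrix_vector_mul_lid)
  define psi :: "complex^3 \<Rightarrow> complex^3" where "psi y = vector [1, y$1, y$2]" for y
  define Dpsi :: "complex^3 \<Rightarrow> complex^3" where "Dpsi h = vector [0, h$1, h$2]" for h
  have psi0: "psi 0 = e 1" by (simp add: psi_def e1_vec)
  have dpsi: "(psi has_derivative Dpsi) (at 0)"
  proof (rule vec_has_derivative)
    fix i :: 3
    have l1: "((\<lambda>y::complex^3. y $ k) has_derivative (\<lambda>h. h $ k)) (at 0)" for k
      by (rule bounded_linear_imp_has_derivative) (rule bounded_linear_vec_nth)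
    consider "i = 1" | "i = 2" | "i = 3" using exhaust_3 by blast
    then show "((\<lambda>y. psi y $ i) has_derivative (\<lambda>h. Dpsi h $ i)) (at 0)"
      by cases (simp_all add: psi_def Dpsi_def l1)
  qed
  define B where "B = T ** Jac M v ** Ti"
  define f where "f y = T *v P0 M (Ti *v psi y)" for y
  define Df where "Df h = B *v Dpsi h" for h
  have df: "(f has_derivative Df) (at 0)"
  proof -
    have a: "((\<lambda>y. Ti *v psi y) has_derivative (\<lambda>h. Ti *v Dpsi h)) (at 0)"
      by (rule bounded_linear.has_derivative[OF matrix_vector_mul_bounded_linear dpsi])
    have b: "(P0 M has_derivative (\<lambda>h. Jac M v *v h)) (at (Ti *v psi 0))"
      using P0_deriv[of M v] by (simp add: psi0 vTi)
    have c: "((\<lambda>y. P0 M (Ti *v psi y)) has_derivative (\<lambda>h. Jac M v *v (Ti *v Dpsi h))) (at 0)"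
      using diff_chain_at[OF a b] by (simp add: o_def)
    have d: "(f has_derivative (\<lambda>h. T *v (Jac M v *v (Ti *v Dpsi h)))) (at 0)"
      unfolding f_def by (rule bounded_linear.has_derivative[OF matrix_vector_mul_bounded_linear c])
    show ?thesis
      using d by (simp add: Df_def[abs_def] B_def matrix_vector_mul_assoc matrix_mul_assoc)
  qed
  have f0: "f 0 = c *s e 1"
    by (simp add: f_def psi0 vTi p[symmetric] pv vector_scalar_commute T(2))
  have dfk: "((\<lambda>y. f y $ k) has_derivative (\<lambda>h. Df h $ k)) (at 0)" for k
    by (rule bounded_linear.has_derivative[OF bounded_linear_vec_nth df])
  have l1: "((\<lambda>y::complex^3. y $ k) has_derivative (\<lambda>h. h $ k)) (at 0)" for k
    by (rule bounded_linear_imp_has_derivative) (rule bounded_linear_vec_nth)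
  have prod: "((\<lambda>y. f y $ 1 * y $ k) has_derivative (\<lambda>h. c * h $ k)) (at 0)" for k
    by (rule has_derivative_eq_rhs[OF has_derivative_mult[OF dfk l1]])
       (simp add: f0 e_def)
  define J :: "complex^3 \<Rightarrow> complex^3" where "J h = vector [- c * h$1 + Df h $ 2, - c * h$2 + Df h $ 3, - c * h$3]" for h
  have pe: "poincare p T = (\<lambda>y. vector [- (f y $ 1) * y$1 + f y $ 2, - (f y $ 1) * y$2 + f y $ 3, - (f y $ 1) * y$3])"
    by (simp add: fun_eq_iff poincare_def f_def psi_def Ti_def p Let_def)
  have dp: "(poincare p T has_derivative J) (at 0)"
    unfolding pe
  proof (rule vec_has_derivative)
    fix i :: 3
    consider "i = 1" | "i = 2" | "i = 3" using exhaust_3 by blast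
    then show "((\<lambda>y. vector [- (f y $ 1) * y$1 + f y $ 2, - (f y $ 1) * y$2 + f y $ 3, - (f y $ 1) * y$3] $ i)
        has_derivative (\<lambda>h. J h $ i)) (at 0)"
    proof cases
      case 1 then show ?thesis by (simp add: J_def has_derivative_diff[OF dfk prod])
    next
      case 2 then show ?thesis by (simp add: J_def has_derivative_diff[OF dfk prod])
    next
      case 3 then show ?thesis by (simp add: J_def has_derivative_minus[OF prod])
    qed
  qed
  have fd: "frechet_derivative (poincare p T) (at 0) = J"
    using frechet_derivative_at[OF dp] by simp
  have ax: "axis (1::3) (1::complex) = vector [1,0,0]" "axis (2::3) (1::complex) = vector [0,1,0]"
    "axis (3::3) (1::complex) = vector [0,0,1]"
    by (simp_all add: vec_eq_iff forall_3 axis_def)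
  have mJ: "matrix J = (\<chi> i j. J (axis j 1) $ i)" by (simp add: matrix_def)
  have Bcol: "B $ k $ 1 = (if k = 1 then 2 * c else 0)" for k
  proof -
    have "B *v e 1 = T *v (Jac M v *v v)"
      by (simp add: B_def matrix_vector_mul_assoc[symmetric] vTi)
    also have "\<dots> = (2 * c) *s e 1"
      by (simp add: Jac_euler p[symmetric] pv vector_scalar_commute T(2))
    finally have "(B *v e 1) $ k = ((2 * c) *s e 1) $ k" by simp
    then show ?thesis by (simp add: e1_vec mv_col) (simp add: vector_def)
  qed
  have "det (mat (t + c) - B) = det (mat (t + c) - Jac M v)"
    unfolding B_def Ti_def by (rule det_similar[OF T(1)])
  moreover have "(t - c) * det (mat t - matrix J) = (t + c) * det (mat (t + c) - B)"
    unfolding mJ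
    by (simp add: det_3 mat_def J_def Df_def Dpsi_def ax mv_col Bcol algebra_simps)
  ultimately show ?thesis using fd by simp
qed

definition Mm :: "complex \<Rightarrow> complex \<Rightarrow> complex \<Rightarrow> complex \<Rightarrow> complex \<Rightarrow> complex \<Rightarrow> complex^3^3" where
  "Mm a1 a2 b2 b3 c1 c3 = vector [vector [1,a1,c1], vector [a2,1,b2], vector [c3,b3,1]]"

lemma Mm_nth[simp]:
  "Mm a1 a2 b2 b3 c1 c3 $ 1 $ 1 = 1" "Mm a1 a2 b2 b3 c1 c3 $ 1 $ 2 = a1" "Mm a1 a2 b2 b3 c1 c3 $ 1 $ 3 = c1"
  "Mm a1 a2 b2 b3 c1 c3 $ 2 $ 1 = a2" "Mm a1 a2 b2 b3 c1 c3 $ 2 $ 2 = 1" "Mm a1 a2 b2 b3 c1 c3 $ 2 $ 3 = b2"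
  "Mm a1 a2 b2 b3 c1 c3 $ 3 $ 1 = c3" "Mm a1 a2 b2 b3 c1 c3 $ 3 $ 2 = b3" "Mm a1 a2 b2 b3 c1 c3 $ 3 $ 3 = 1"
  by (simp_all add: Mm_def)

lemma finish:
  fixes ch X :: "complex \<Rightarrow> complex"
  assumes ev: "\<forall>t. ch t = (t-l1)*(t-l2)*(t-l3)" and cj: "\<forall>t. (t-c)*ch t = (t+c)*X t"
    and xf: "\<forall>t. X t = (t-c)*(t-c*n2)*(t-c*n3)" and c: "c\<noteq>0" and Q: "Q_indep [-1,n2,n3]"
  shows "Q_indep [l1,l2,l3]"
proof (rule cubic_perm[of c l1 l2 l3 "-c" "c*n2" "c*n3"])
  fix t assume t: "t \<noteq> c"
  have a: "(t-c)*ch t = (t+c)*X t" using cj by blast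
  have "(t-c)*((t-l1)*(t-l2)*(t-l3)) = (t+c)*((t-c)*(t-c*n2)*(t-c*n3))"
    using a unfolding ev[rule_format] xf[rule_format] .
  then have "(t-c)*((t-l1)*(t-l2)*(t-l3)) = (t-c)*((t - -c)*(t-c*n2)*(t-c*n3))"
    by (simp add: algebra_simps)
  then show "(t-l1)*(t-l2)*(t-l3) = (t - -c)*(t-c*n2)*(t-c*n3)" using t by simp
next
  show "Q_indep [-c, c*n2, c*n3]" using Q_indep_scale[OF c Q] by simp
qed

lemma det_zero_kernel:
  fixes A :: "complex^3^3"
  assumes "A *v v = 0" "v \<noteq> 0" shows "det A = 0"
proof (rule ccontr)
  assume "det A \<noteq> 0"
  then have "invertible A" by (simp add: invertible_det_nz)
  then have "inj ((*v) A)" by (rule inj_matrix_vector_mult)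
  then have "v = 0" using injD[of "(*v) A" v 0] assms(1) by simp
  with assms(2) show False by simp
qed

lemma core:
  fixes a1 a2 b2 b3 c1 c3 c :: complex and v :: "complex^3" and ch :: "complex \<Rightarrow> complex"
  defines "M \<equiv> Mm a1 a2 b2 b3 c1 c3"
  assumes v0: "v \<noteq> 0" and pv: "P0 M v = c *s v"
    and nd1: "a1*a2 \<noteq> 1" and nd2: "b2*b3 \<noteq> 1" and nd3: "c1*c3 \<noteq> 1" and nd4: "det M \<noteq> 0"
    and cj: "\<forall>t. (t-c)*ch t = (t+c) * det (mat (t+c) - Jac M v)"
    and ev: "\<forall>t. ch t = (t-l1)*(t-l2)*(t-l3)"
    and Q100: "Q_indep [-1, a2-1, c3-1]"
    and Q010: "Q_indep [-1, a1-1, b3-1]"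
    and Q001: "Q_indep [-1, c1-1, b2-1]"
    and Q110: "\<And>x1 x2. x1 + a1*x2 = 1 \<Longrightarrow> a2*x1 + x2 = 1 \<Longrightarrow> Q_indep [-1, x1+x2-1, c3*x1+b3*x2-1]"
    and Q011: "\<And>x2 x3. x2 + b2*x3 = 1 \<Longrightarrow> b3*x2 + x3 = 1 \<Longrightarrow> Q_indep [-1, x2+x3-1, a1*x2+c1*x3-1]"
    and Q101: "\<And>x1 x3. x1 + c1*x3 = 1 \<Longrightarrow> c3*x1 + x3 = 1 \<Longrightarrow> Q_indep [-1, x1+x3-1, a2*x1+b2*x3-1]"
    and Q111: "\<And>w n2 n3. M *v w = vector [1,1,1] \<Longrightarrow> n2 + n3 = w$1+w$2+w$3-1 \<Longrightarrow>
                  n2*n3 = w$1*w$2*w$3*det M \<Longrightarrow> Q_indep [-1, n2, n3]"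
  shows "Q_indep [l1,l2,l3]"
proof -
  define x1 where "x1 = v$1"
  define x2 where "x2 = v$2"
  define x3 where "x3 = v$3"
  have u: "(M *v v)$1 = x1 + a1*x2 + c1*x3" "(M *v v)$2 = a2*x1 + x2 + b2*x3" "(M *v v)$3 = c3*x1 + b3*x2 + x3"
    by (simp_all add: M_def x1_def x2_def x3_def matrix_vector_mult_def sum_3)
  have pvi: "v$i * (M *v v)$i = c * v$i" for i
    using pv by (simp add: P0_def vec_eq_iff)
  have e1: "x1 * (x1 + a1*x2 + c1*x3) = c * x1" using pvi[of 1] u by (simp add: x1_def)
  have e2: "x2 * (a2*x1 + x2 + b2*x3) = c * x2" using pvi[of 2] u by (simp add: x2_def)
  have e3: "x3 * (c3*x1 + b3*x2 + x3) = c * x3" using pvi[of 3] u by (simp add: x3_def)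
  have vne: "x1 \<noteq> 0 \<or> x2 \<noteq> 0 \<or> x3 \<noteq> 0"
    using v0 by (auto simp: x1_def x2_def x3_def vec_eq_iff forall_3)
  define X where "X t = det (mat (t+c) - Jac M v)" for t
  have Xe: "X t = det (vector [vector [t + c - (x1 + a1*x2 + c1*x3) - x1, - x1*a1, - x1*c1],
                               vector [- x2*a2, t + c - (a2*x1 + x2 + b2*x3) - x2, - x2*b2],
                               vector [- x3*c3, - x3*b3, t + c - (c3*x1 + b3*x2 + x3) - x3]] :: complex^3^3)" for t
    unfolding X_def
    by (rule arg_cong[where f = det]) (simp add: vec_eq_iff forall_3 mat_def Jac_def M_def matrix_vector_mult_def sum_3 x1_def x2_def x3_def algebra_simps)
  have cj': "\<forall>t. (t-c)*ch t = (t+c) * X t" using cj by (simp add: X_def)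
  have Xc: "X c = 0"
  proof -
    have "(mat (c + c) - Jac M v) *v v = 0"
      by (simp add: matrix_vector_mult_diff_rdistrib mat_mult_vec Jac_euler pv scaleR_2 vector_sadd_rdistrib)
    then show ?thesis unfolding X_def using det_zero_kernel v0 by blast
  qed
  have Xd: "X t = (t + c - (x1 + a1*x2 + c1*x3) - x1) * (t + c - (a2*x1 + x2 + b2*x3) - x2) * (t + c - (c3*x1 + b3*x2 + x3) - x3)
     + (- x1*a1) * (- x2*b2) * (- x3*c3) + (- x1*c1) * (- x2*a2) * (- x3*b3)
     - (t + c - (x1 + a1*x2 + c1*x3) - x1) * (- x2*b2) * (- x3*b3)
     - (- x1*a1) * (- x2*a2) * (t + c - (c3*x1 + b3*x2 + x3) - x3)
     - (- x1*c1) * (t + c - (a2*x1 + x2 + b2*x3) - x2) * (- x3*c3)" for t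
    unfolding Xe by (simp add: det_3)
  have detM: "det M = 1 + a1*b2*c3 + c1*a2*b3 - b2*b3 - a1*a2 - c1*c3"
    by (simp add: det_3 M_def)
  show ?thesis
  proof (cases "c = 0")
    case True
    have f1: "x1 = 0 \<or> x1 + a1*x2 + c1*x3 = 0" using e1 True by simp
    have f2: "x2 = 0 \<or> a2*x1 + x2 + b2*x3 = 0" using e2 True by simp
    have f3: "x3 = 0 \<or> c3*x1 + b3*x2 + x3 = 0" using e3 True by simp
    have False
    proof (cases "x1 = 0"; cases "x2 = 0"; cases "x3 = 0")
      assume "x1 \<noteq> 0" "x2 \<noteq> 0" "x3 \<noteq> 0"
      then have "M *v v = 0" using f1 f2 f3 u by (simp add: vec_eq_iff forall_3)
      then have "det M = 0" using det_zero_kernel v0 by blast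
      with nd4 show False by simp
    next
      assume h: "x1 \<noteq> 0" "x2 \<noteq> 0" "x3 = 0"
      then have "x1 + a1*x2 = 0" "a2*x1 + x2 = 0" using f1 f2 by auto
      then have "x1 * (1 - a1*a2) = 0" by algebra
      with h nd1 show False by simp
    next
      assume h: "x1 = 0" "x2 \<noteq> 0" "x3 \<noteq> 0"
      then have "x2 + b2*x3 = 0" "b3*x2 + x3 = 0" using f2 f3 by auto
      then have "x2 * (1 - b2*b3) = 0" by algebra
      with h nd2 show False by simp
    next
      assume h: "x1 \<noteq> 0" "x2 = 0" "x3 \<noteq> 0"
      then have "x1 + c1*x3 = 0" "c3*x1 + x3 = 0" using f1 f3 by auto
      then have "x1 * (1 - c1*c3) = 0" by algebra
      with h nd3 show False by simp
    qed (use f1 f2 f3 vne in auto)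
    then show ?thesis ..
  next
    case False
    have f1: "x1 = 0 \<or> x1 + a1*x2 + c1*x3 = c" using e1 by auto
    have f2: "x2 = 0 \<or> a2*x1 + x2 + b2*x3 = c" using e2 by auto
    have f3: "x3 = 0 \<or> c3*x1 + b3*x2 + x3 = c" using e3 by auto
    have fin: "Q_indep [l1,l2,l3]" if "\<forall>t. X t = (t-c)*(t-c*n2)*(t-c*n3)" "Q_indep [-1,n2,n3]" for n2 n3
      by (rule finish[OF ev cj' that(1) False that(2)])
    show ?thesis
    proof (cases "x1 = 0"; cases "x2 = 0"; cases "x3 = 0")
      assume h: "x1 \<noteq> 0" "x2 \<noteq> 0" "x3 \<noteq> 0"
      then have g: "x1 + a1*x2 + c1*x3 = c" "a2*x1 + x2 + b2*x3 = c" "c3*x1 + b3*x2 + x3 = c"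
        using f1 f2 f3 by auto
      define E1 where "E1 = x1 + x2 + x3"
      define E2 where "E2 = x1*x2*(1 - a1*a2) + x2*x3*(1 - b2*b3) + x1*x3*(1 - c1*c3)"
      define E3 where "E3 = x1*x2*x3*det M"
      have Xp: "X t = t^3 - E1*t^2 + E2*t - E3" for t
        unfolding Xd g E1_def E2_def E3_def detM by (simp add: algebra_simps power2_eq_square power3_eq_cube)
      have "c^3 - E1*c^2 + E2*c - E3 = 0" using Xc Xp[of c] by simp
      then have E2e: "E2 = (E3 + E1*c^2 - c^3)/c" using False by (simp add: field_simps)
      define S where "S = E1/c - 1"
      define P where "P = E3/c^3"
      define r where "r = csqrt (S^2 - 4*P)"
      define n2 where "n2 = (S + r)/2"
      define n3 where "n3 = S - n2"
      have r2: "r^2 = S^2 - 4*P" by (simp add: r_def)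
      have sn: "n2 + n3 = S" by (simp add: n3_def)
      have pn: "n2 * n3 = P"
      proof -
        have "4 * (n2 * n3) = S^2 - r^2" by (simp add: n3_def n2_def field_simps power2_eq_square)
        then show ?thesis using r2 by simp
      qed
      have Xf: "\<forall>t. X t = (t-c)*(t-c*n2)*(t-c*n3)"
      proof
        fix t
        have "(t-c*n2)*(t-c*n3) = t^2 - c*(n2+n3)*t + c^2*(n2*n3)" by (simp add: algebra_simps power2_eq_square)
        also have "\<dots> = t^2 - (E1 - c)*t + E3/c"
          using False unfolding sn pn S_def P_def by (simp add: field_simps power2_eq_square power3_eq_cube)
        finally have a: "(t-c*n2)*(t-c*n3) = t^2 - (E1 - c)*t + E3/c" .
        show "X t = (t-c)*(t-c*n2)*(t-c*n3)"
          unfolding Xp E2e mult.assoc a using False by (simp add: field_simps power2_eq_square power3_eq_cube)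
      qed
      define w where "w = (1/c) *s v"
      have Mw: "M *v w = vector [1,1,1]"
        using g False u by (simp add: w_def vector_scalar_commute vec_eq_iff forall_3)
      have Q: "Q_indep [-1, n2, n3]"
      proof (rule Q111[folded M_def, OF Mw])
        show "n2 + n3 = w$1 + w$2 + w$3 - 1"
          using sn by (simp add: S_def E1_def w_def x1_def x2_def x3_def add_divide_distrib)
        show "n2 * n3 = w$1 * w$2 * w$3 * det M"
          using pn by (simp add: P_def E3_def w_def x1_def x2_def x3_def power3_eq_cube)
      qed
      show ?thesis by (rule fin[OF Xf Q])
    next
      assume h: "x1 \<noteq> 0" "x2 \<noteq> 0" "x3 = 0"
      then have g: "x1 + a1*x2 = c" "a2*x1 + x2 = c" using f1 f2 by auto
      have Xf: "\<forall>t. X t = (t-c)*(t-c*((x1+x2)/c - 1))*(t-c*((c3*x1+b3*x2)/c - 1))"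
        using False unfolding Xd h(3) by (simp add: field_simps) (use g in algebra)
      have Q: "Q_indep [-1, (x1+x2)/c - 1, (c3*x1+b3*x2)/c - 1]"
        using Q110[of "x1/c" "x2/c"] g False by (simp add: field_simps)
      show ?thesis by (rule fin[OF Xf Q])
    next
      assume h: "x1 = 0" "x2 \<noteq> 0" "x3 \<noteq> 0"
      then have g: "x2 + b2*x3 = c" "b3*x2 + x3 = c" using f2 f3 by auto
      have Xf: "\<forall>t. X t = (t-c)*(t-c*((x2+x3)/c - 1))*(t-c*((a1*x2+c1*x3)/c - 1))"
        using False unfolding Xd h(1) by (simp add: field_simps) (use g in algebra)
      have Q: "Q_indep [-1, (x2+x3)/c - 1, (a1*x2+c1*x3)/c - 1]"
        using Q011[of "x2/c" "x3/c"] g False by (simp add: field_simps)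
      show ?thesis by (rule fin[OF Xf Q])
    next
      assume h: "x1 \<noteq> 0" "x2 = 0" "x3 \<noteq> 0"
      then have g: "x1 + c1*x3 = c" "c3*x1 + x3 = c" using f1 f3 by auto
      have Xf: "\<forall>t. X t = (t-c)*(t-c*((x1+x3)/c - 1))*(t-c*((a2*x1+b2*x3)/c - 1))"
        using False unfolding Xd h(2) by (simp add: field_simps) (use g in algebra)
      have Q: "Q_indep [-1, (x1+x3)/c - 1, (a2*x1+b2*x3)/c - 1]"
        using Q101[of "x1/c" "x3/c"] g False by (simp add: field_simps)
      show ?thesis by (rule fin[OF Xf Q])
    next
      assume h: "x1 \<noteq> 0" "x2 = 0" "x3 = 0"
      then have g: "x1 = c" using f1 by auto
      have Xf: "\<forall>t. X t = (t-c)*(t-c*(a2-1))*(t-c*(c3-1))"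
        unfolding Xd h(2,3) g by (simp add: algebra_simps)
      show ?thesis by (rule fin[OF Xf Q100])
    next
      assume h: "x1 = 0" "x2 \<noteq> 0" "x3 = 0"
      then have g: "x2 = c" using f2 by auto
      have Xf: "\<forall>t. X t = (t-c)*(t-c*(a1-1))*(t-c*(b3-1))"
        unfolding Xd h(1,3) g by (simp add: algebra_simps)
      show ?thesis by (rule fin[OF Xf Q010])
    next
      assume h: "x1 = 0" "x2 = 0" "x3 \<noteq> 0"
      then have g: "x3 = c" using f3 by auto
      have Xf: "\<forall>t. X t = (t-c)*(t-c*(c1-1))*(t-c*(b2-1))"
        unfolding Xd h(1,2) g by (simp add: algebra_simps)
      show ?thesis by (rule fin[OF Xf Q001])
    qed (use vne in auto)
  qed
qed

lemma p_form:
  fixes p :: "complex^3 \<Rightarrow> complex^3" and A B C D E F :: complex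
  assumes hq: "hom_quadratic p" and ide: "\<And>i. p (e i) = e i"
    and g1: "p (vector [A,B,0]) = vector [A,B,0]"
    and g2: "p (vector [0,C,D]) = vector [0,C,D]"
    and g3: "p (vector [E,0,F]) = vector [E,0,F]"
    and nz: "A \<noteq> 0" "B \<noteq> 0" "C \<noteq> 0" "D \<noteq> 0" "E \<noteq> 0" "F \<noteq> 0"
  shows "p = P0 (Mm ((1-A)/B) ((1-B)/A) ((1-C)/D) ((1-D)/C) ((1-E)/F) ((1-F)/E))"
proof -
  obtain cc :: "3 \<Rightarrow> 3 \<Rightarrow> 3 \<Rightarrow> complex" where hc: "\<And>x i. p x $ i = (\<Sum>j\<in>UNIV. \<Sum>k\<in>UNIV. cc i j k * x $ j * x $ k)"
    using hq unfolding hom_quadratic_def by blast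
  have ex: "p y $ i = cc i 1 1 * (y$1*y$1) + cc i 2 2*(y$2*y$2) + cc i 3 3*(y$3*y$3)
     + (cc i 1 2 + cc i 2 1)*(y$1*y$2) + (cc i 2 3 + cc i 3 2)*(y$2*y$3) + (cc i 1 3 + cc i 3 1)*(y$1*y$3)" for y i
    unfolding hc by (simp add: sum_3 algebra_simps)
  have ej: "e j $ k = (if k = j then 1 else 0)" for j k by (simp add: e_def axis_def)
  have dg: "cc i j j = (if i = j then 1 else 0)" for i j
  proof -
    have "p (e j) $ i = e j $ i" using ide by simp
    moreover have "p (e j) $ i = cc i j j"
      using exhaust_3[of j] by (auto simp: ex ej)
    ultimately show ?thesis by (simp add: ej)
  qed
  have d1: "cc 1 1 1 = 1" "cc 1 2 2 = 0" "cc 1 3 3 = 0" using dg by auto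
  have d2: "cc 2 1 1 = 0" "cc 2 2 2 = 1" "cc 2 3 3 = 0" using dg by auto
  have d3: "cc 3 1 1 = 0" "cc 3 2 2 = 0" "cc 3 3 3 = 1" using dg by auto
  have h1: "p (vector [A,B,0]) $ i = vector [A,B,0] $ i" for i using g1 by simp
  have h2: "p (vector [0,C,D]) $ i = vector [0,C,D] $ i" for i using g2 by simp
  have h3: "p (vector [E,0,F]) $ i = vector [E,0,F] $ i" for i using g3 by simp
  have sv1: "s = (1-a)/b" if "a \<noteq> 0" "b \<noteq> 0" "a * (a + b * s - 1) = 0" for a b s :: complex
  proof -
    have "a + b * s - 1 = 0" using that(1,3) by simp
    then have "s * b = 1 - a" by algebra
    then show ?thesis using that(2) by (simp add: eq_divide_eq)
  qed
  have sv0: "s = 0" if "a \<noteq> 0" "b \<noteq> 0" "a * b * s = 0" for a b s :: complex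
    using that by simp
  have s12: "cc 1 1 2 + cc 1 2 1 = (1-A)/B" "cc 2 1 2 + cc 2 2 1 = (1-B)/A" "cc 3 1 2 + cc 3 2 1 = 0"
    apply (rule sv1[OF nz(1) nz(2)]) using h1[of 1] unfolding ex apply (simp add: d1 algebra_simps)
    apply (rule sv1[OF nz(2) nz(1)]) using h1[of 2] unfolding ex apply (simp add: d2 algebra_simps)
    apply (rule sv0[OF nz(1) nz(2)]) using h1[of 3] unfolding ex apply (simp add: d3 algebra_simps)
    done
  have s23: "cc 1 2 3 + cc 1 3 2 = 0" "cc 2 2 3 + cc 2 3 2 = (1-C)/D" "cc 3 2 3 + cc 3 3 2 = (1-D)/C"
    apply (rule sv0[OF nz(3) nz(4)]) using h2[of 1] unfolding ex apply (simp add: d1 algebra_simps)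
    apply (rule sv1[OF nz(3) nz(4)]) using h2[of 2] unfolding ex apply (simp add: d2 algebra_simps)
    apply (rule sv1[OF nz(4) nz(3)]) using h2[of 3] unfolding ex apply (simp add: d3 algebra_simps)
    done
  have s13: "cc 1 1 3 + cc 1 3 1 = (1-E)/F" "cc 2 1 3 + cc 2 3 1 = 0" "cc 3 1 3 + cc 3 3 1 = (1-F)/E"
    apply (rule sv1[OF nz(5) nz(6)]) using h3[of 1] unfolding ex apply (simp add: d1 algebra_simps)
    apply (rule sv0[OF nz(5) nz(6)]) using h3[of 2] unfolding ex apply (simp add: d2 algebra_simps)
    apply (rule sv1[OF nz(6) nz(5)]) using h3[of 3] unfolding ex apply (simp add: d3 algebra_simps)
    done
  show ?thesis
  proof (rule ext)
    fix x :: "complex^3"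
    show "p x = P0 (Mm ((1-A)/B) ((1-B)/A) ((1-C)/D) ((1-D)/C) ((1-E)/F) ((1-F)/E)) x"
      unfolding vec_eq_iff forall_3 P0_def
      by (simp add: ex d1 d2 d3 s12 s23 s13 matrix_vector_mult_def sum_3 algebra_simps)
  qed
qed

definition Kp :: "(nat \<Rightarrow> complex) \<Rightarrow> complex" where
"Kp x = - x 2 * x 3 * x 4 * x 5 + x 1 * x 3 * x 4 - x 1 * x 3 * (x 4)^2 - x 1 * (x 3)^2 * x 4 + x 1 * (x 3)^2 * (x 4)^2 + x 1 * x 2 * x 3 * x 4 * x 5 - (x 1)^2 * x 3 * x 4 + (x 1)^2 * x 3 * (x 4)^2 + (x 1)^2 * (x 3)^2 * x 4 - (x 1)^2 * (x 3)^2 * (x 4)^2 + x 0 * x 2 * x 5 - x 0 * x 2 * (x 5)^2 + x 0 * x 2 * x 3 * x 4 * x 5 - x 0 * (x 2)^2 * x 5 + x 0 * (x 2)^2 * (x 5)^2 - x 0 * x 1 * x 4 * x 5 + x 0 * x 1 * x 3 * x 4 * x 5 + x 0 * x 1 * x 2 * x 4 * x 5 - x 0 * x 1 * x 2 * x 3 + x 0 * x 1 * x 2 * x 3 * x 5 + x 0 * x 1 * x 2 * x 3 * x 4 - 2 * x 0 * x 1 * x 2 * x 3 * x 4 * x 5 - (x 0)^2 * x 2 * x 5 + (x 0)^2 * x 2 * (x 5)^2 + (x 0)^2 * (x 2)^2 * x 5 - (x 0)^2 * (x 2)^2 * (x 5)^2"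

definition W1p :: "(nat \<Rightarrow> complex) \<Rightarrow> complex" where
"W1p x = x 2 * x 5 - x 2 * x 3 * x 5 - (x 2)^2 * x 5 - x 1 * x 5 + x 1 * x 3 + x 1 * x 3 * x 5 - x 1 * x 3 * x 4 - x 1 * (x 3)^2 + x 1 * (x 3)^2 * x 4 + x 1 * x 2 * x 5 - x 1 * x 2 * x 3 + x 1 * x 2 * x 3 * x 4 - x 0 * x 2 * x 5 + x 0 * x 2 * x 3 * x 5 + x 0 * (x 2)^2 * x 5"

definition W2p :: "(nat \<Rightarrow> complex) \<Rightarrow> complex" where
"W2p x = x 3 * x 4 - x 3 * x 4 * x 5 - x 3 * (x 4)^2 - x 1 * x 3 * x 4 + x 1 * x 3 * x 4 * x 5 + x 1 * x 3 * (x 4)^2 + x 0 * x 5 - x 0 * (x 5)^2 - x 0 * x 4 * x 5 - x 0 * x 3 + x 0 * x 3 * x 5 + x 0 * x 3 * x 4 - x 0 * x 2 * x 5 + x 0 * x 2 * (x 5)^2 + x 0 * x 2 * x 4 * x 5"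

definition W3p :: "(nat \<Rightarrow> complex) \<Rightarrow> complex" where
"W3p x = - x 2 * x 4 + x 1 * x 4 - x 1 * x 3 * x 4 + x 1 * x 2 * x 4 - (x 1)^2 * x 4 + (x 1)^2 * x 3 * x 4 + x 0 * x 2 - x 0 * x 2 * x 5 + x 0 * x 2 * x 4 - x 0 * x 1 * x 4 + x 0 * x 1 * x 3 * x 4 - x 0 * x 1 * x 2 + x 0 * x 1 * x 2 * x 5 - (x 0)^2 * x 2 + (x 0)^2 * x 2 * x 5"


lemma Kp_rp: "Kp \<in> rp" unfolding Kp_def[abs_def] by (intro rp_intros) auto
lemma W1p_rp: "W1p \<in> rp" unfolding W1p_def[abs_def] by (intro rp_intros) auto
lemma W2p_rp: "W2p \<in> rp" unfolding W2p_def[abs_def] by (intro rp_intros) auto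
lemma W3p_rp: "W3p \<in> rp" unfolding W3p_def[abs_def] by (intro rp_intros) auto

lemma rp_pt:
  assumes ai: "alg_indep 6 (\<lambda>k. [A,B,C,D,E,F] ! k)" and f: "f \<in> rp"
    and z: "f (\<lambda>k. [A,B,C,D,E,F] ! k) = 0"
  shows "f (\<lambda>k. [a,b,c,d,ee,h] ! k) = 0"
  by (rule rp_spec[OF ai f z])

lemma rp_nz:
  assumes ai: "alg_indep 6 (\<lambda>k. [A,B,C,D,E,F] ! k)" and f: "f \<in> rp"
    and pt: "f (\<lambda>k. [a,b,c,d,ee,h] ! k) \<noteq> 0"
  shows "f (\<lambda>k. [A,B,C,D,E,F] ! k) \<noteq> 0"
  using rp_pt[OF ai f, of a b c d ee h] pt by blast

lemma nzs:
  assumes ai: "alg_indep 6 (\<lambda>k. [A,B,C,D,E,F] ! k)"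
  shows "A \<noteq> 0" "B \<noteq> 0" "C \<noteq> 0" "D \<noteq> 0" "E \<noteq> 0" "F \<noteq> 0"
    "A + B \<noteq> 1" "C + D \<noteq> 1" "E + F \<noteq> 1" "Kp (\<lambda>k. [A,B,C,D,E,F] ! k) \<noteq> 0"
proof -
  have v: "(\<lambda>x. x i) \<in> rp" if "i < 6" for i using that by (rule rp_var)
  show "A \<noteq> 0" using rp_nz[OF ai v[of 0], of 1 1 1 1 1 1] by simp
  show "B \<noteq> 0" using rp_nz[OF ai v[of 1], of 1 1 1 1 1 1] by simp
  show "C \<noteq> 0" using rp_nz[OF ai v[of 2], of 1 1 1 1 1 1] by simp
  show "D \<noteq> 0" using rp_nz[OF ai v[of 3], of 1 1 1 1 1 1] by simp
  show "E \<noteq> 0" using rp_nz[OF ai v[of 4], of 1 1 1 1 1 1] by simp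
  show "F \<noteq> 0" using rp_nz[OF ai v[of 5], of 1 1 1 1 1 1] by simp
  have "(\<lambda>x. x 0 + x 1 - 1) \<in> rp" by (intro rp_intros) auto
  from rp_nz[OF ai this, of 0 0 0 0 0 0] show "A + B \<noteq> 1" by simp
  have "(\<lambda>x. x 2 + x 3 - 1) \<in> rp" by (intro rp_intros) auto
  from rp_nz[OF ai this, of 0 0 0 0 0 0] show "C + D \<noteq> 1" by simp
  have "(\<lambda>x. x 4 + x 5 - 1) \<in> rp" by (intro rp_intros) auto
  from rp_nz[OF ai this, of 0 0 0 0 0 0] show "E + F \<noteq> 1" by simp
  from rp_nz[OF ai Kp_rp, of 2 3 5 7 11 13] show "Kp (\<lambda>k. [A,B,C,D,E,F] ! k) \<noteq> 0"
    by (simp add: Kp_def)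
qed

lemma Q100:
  assumes ai: "alg_indep 6 (\<lambda>k. [A,B,C,D,E,F] ! k)"
  shows "Q_indep [-1, (1-B)/A - 1, (1-F)/E - 1]"
  unfolding Q_indep3
proof (intro allI impI)
  fix q0 q1 q2 :: rat
  assume r: "of_rat q0 * -1 + of_rat q1 * ((1-B)/A - 1) + of_rat q2 * ((1-F)/E - 1) = 0"
  note nz = nzs[OF ai]
  define f where "f = (\<lambda>x::nat\<Rightarrow>complex. - of_rat q0 * (x 0 * x 4) + of_rat q1 * ((1 - x 1) * x 4 - x 0 * x 4) + of_rat q2 * ((1 - x 5) * x 0 - x 0 * x 4))"
  have frp: "f \<in> rp" unfolding f_def by (intro rp_intros) auto
  have "f (\<lambda>k. [A,B,C,D,E,F] ! k) = A * E * (of_rat q0 * -1 + of_rat q1 * ((1-B)/A - 1) + of_rat q2 * ((1-F)/E - 1))"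
    using nz by (simp add: f_def field_simps)
  then have fz: "f (\<lambda>k. [A,B,C,D,E,F] ! k) = 0" using r by simp
  have "f (\<lambda>k. [0,0,0,0,1,0] ! k) = 0" by (rule rp_pt[OF ai frp fz])
  then have h1: "q1 = 0" by (simp add: f_def)
  have "f (\<lambda>k. [1,0,0,0,0,0] ! k) = 0" by (rule rp_pt[OF ai frp fz])
  then have h2: "q2 = 0" by (simp add: f_def)
  have "f (\<lambda>k. [1,1,0,0,1,1] ! k) = 0" by (rule rp_pt[OF ai frp fz])
  then have h0: "q0 = 0" using h1 h2 by (simp add: f_def)
  show "q0 = 0 \<and> q1 = 0 \<and> q2 = 0" using h0 h1 h2 by simp
qed

lemma Q010:
  assumes ai: "alg_indep 6 (\<lambda>k. [A,B,C,D,E,F] ! k)"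
  shows "Q_indep [-1, (1-A)/B - 1, (1-D)/C - 1]"
  unfolding Q_indep3
proof (intro allI impI)
  fix q0 q1 q2 :: rat
  assume r: "of_rat q0 * -1 + of_rat q1 * ((1-A)/B - 1) + of_rat q2 * ((1-D)/C - 1) = 0"
  note nz = nzs[OF ai]
  define f where "f = (\<lambda>x::nat\<Rightarrow>complex. - of_rat q0 * (x 1 * x 2) + of_rat q1 * ((1 - x 0) * x 2 - x 1 * x 2) + of_rat q2 * ((1 - x 3) * x 1 - x 1 * x 2))"
  have frp: "f \<in> rp" unfolding f_def by (intro rp_intros) auto
  have "f (\<lambda>k. [A,B,C,D,E,F] ! k) = B * C * (of_rat q0 * -1 + of_rat q1 * ((1-A)/B - 1) + of_rat q2 * ((1-D)/C - 1))"
    using nz by (simp add: f_def field_simps)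
  then have fz: "f (\<lambda>k. [A,B,C,D,E,F] ! k) = 0" using r by simp
  have "f (\<lambda>k. [0,0,1,0,0,0] ! k) = 0" by (rule rp_pt[OF ai frp fz])
  then have h1: "q1 = 0" by (simp add: f_def)
  have "f (\<lambda>k. [0,1,0,0,0,0] ! k) = 0" by (rule rp_pt[OF ai frp fz])
  then have h2: "q2 = 0" by (simp add: f_def)
  have "f (\<lambda>k. [1,1,1,1,0,0] ! k) = 0" by (rule rp_pt[OF ai frp fz])
  then have h0: "q0 = 0" using h1 h2 by (simp add: f_def)
  show "q0 = 0 \<and> q1 = 0 \<and> q2 = 0" using h0 h1 h2 by simp
qed

lemma Q001:
  assumes ai: "alg_indep 6 (\<lambda>k. [A,B,C,D,E,F] ! k)"
  shows "Q_indep [-1, (1-E)/F - 1, (1-C)/D - 1]"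
  unfolding Q_indep3
proof (intro allI impI)
  fix q0 q1 q2 :: rat
  assume r: "of_rat q0 * -1 + of_rat q1 * ((1-E)/F - 1) + of_rat q2 * ((1-C)/D - 1) = 0"
  note nz = nzs[OF ai]
  define f where "f = (\<lambda>x::nat\<Rightarrow>complex. - of_rat q0 * (x 3 * x 5) + of_rat q1 * ((1 - x 4) * x 3 - x 3 * x 5) + of_rat q2 * ((1 - x 2) * x 5 - x 3 * x 5))"
  have frp: "f \<in> rp" unfolding f_def by (intro rp_intros) auto
  have "f (\<lambda>k. [A,B,C,D,E,F] ! k) = D * F * (of_rat q0 * -1 + of_rat q1 * ((1-E)/F - 1) + of_rat q2 * ((1-C)/D - 1))"
    using nz by (simp add: f_def field_simps)
  then have fz: "f (\<lambda>k. [A,B,C,D,E,F] ! k) = 0" using r by simp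
  have "f (\<lambda>k. [0,0,0,1,0,0] ! k) = 0" by (rule rp_pt[OF ai frp fz])
  then have h1: "q1 = 0" by (simp add: f_def)
  have "f (\<lambda>k. [0,0,0,0,0,1] ! k) = 0" by (rule rp_pt[OF ai frp fz])
  then have h2: "q2 = 0" by (simp add: f_def)
  have "f (\<lambda>k. [0,0,1,1,1,1] ! k) = 0" by (rule rp_pt[OF ai frp fz])
  then have h0: "q0 = 0" using h1 h2 by (simp add: f_def)
  show "q0 = 0 \<and> q1 = 0 \<and> q2 = 0" using h0 h1 h2 by simp
qed

lemma Q110g:
  assumes ai: "alg_indep 6 (\<lambda>k. [A,B,C,D,E,F] ! k)"
  shows "Q_indep [-1, A + B - 1, (1-F)/E * A + (1-D)/C * B - 1]"
  unfolding Q_indep3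
proof (intro allI impI)
  fix q0 q1 q2 :: rat
  assume r: "of_rat q0 * -1 + of_rat q1 * (A + B - 1) + of_rat q2 * ((1-F)/E * A + (1-D)/C * B - 1) = 0"
  note nz = nzs[OF ai]
  define f where "f = (\<lambda>x::nat\<Rightarrow>complex. - of_rat q0 * (x 2 * x 4) + of_rat q1 * ((x 0 + x 1 - 1) * x 2 * x 4) + of_rat q2 * ((1 - x 5) * x 0 * x 2 + (1 - x 3) * x 1 * x 4 - x 2 * x 4))"
  have frp: "f \<in> rp" unfolding f_def by (intro rp_intros) auto
  have "f (\<lambda>k. [A,B,C,D,E,F] ! k) = C * E * (of_rat q0 * -1 + of_rat q1 * (A + B - 1) + of_rat q2 * ((1-F)/E * A + (1-D)/C * B - 1))"
    using nz by (simp add: f_def field_simps)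
  then have fz: "f (\<lambda>k. [A,B,C,D,E,F] ! k) = 0" using r by simp
  have "f (\<lambda>k. [0,1,0,0,1,0] ! k) = 0" by (rule rp_pt[OF ai frp fz])
  then have h2: "q2 = 0" by (simp add: f_def)
  have "f (\<lambda>k. [0,1,1,0,1,0] ! k) = 0" by (rule rp_pt[OF ai frp fz])
  then have h0: "q0 = 0" using h2 by (simp add: f_def)
  have "f (\<lambda>k. [1,1,1,0,1,0] ! k) = 0" by (rule rp_pt[OF ai frp fz])
  then have h1: "q1 = 0" using h0 h2 by (simp add: f_def)
  show "q0 = 0 \<and> q1 = 0 \<and> q2 = 0" using h0 h1 h2 by simp
qed

lemma Q011g:
  assumes ai: "alg_indep 6 (\<lambda>k. [A,B,C,D,E,F] ! k)"
  shows "Q_indep [-1, C + D - 1, (1-A)/B * C + (1-E)/F * D - 1]"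
  unfolding Q_indep3
proof (intro allI impI)
  fix q0 q1 q2 :: rat
  assume r: "of_rat q0 * -1 + of_rat q1 * (C + D - 1) + of_rat q2 * ((1-A)/B * C + (1-E)/F * D - 1) = 0"
  note nz = nzs[OF ai]
  define f where "f = (\<lambda>x::nat\<Rightarrow>complex. - of_rat q0 * (x 1 * x 5) + of_rat q1 * ((x 2 + x 3 - 1) * x 1 * x 5) + of_rat q2 * ((1 - x 0) * x 2 * x 5 + (1 - x 4) * x 3 * x 1 - x 1 * x 5))"
  have frp: "f \<in> rp" unfolding f_def by (intro rp_intros) auto
  have "f (\<lambda>k. [A,B,C,D,E,F] ! k) = B * F * (of_rat q0 * -1 + of_rat q1 * (C + D - 1) + of_rat q2 * ((1-A)/B * C + (1-E)/F * D - 1))"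
    using nz by (simp add: f_def field_simps)
  then have fz: "f (\<lambda>k. [A,B,C,D,E,F] ! k) = 0" using r by simp
  have "f (\<lambda>k. [0,0,1,0,0,1] ! k) = 0" by (rule rp_pt[OF ai frp fz])
  then have h2: "q2 = 0" by (simp add: f_def)
  have "f (\<lambda>k. [0,1,1,0,0,1] ! k) = 0" by (rule rp_pt[OF ai frp fz])
  then have h0: "q0 = 0" using h2 by (simp add: f_def)
  have "f (\<lambda>k. [0,1,1,1,0,1] ! k) = 0" by (rule rp_pt[OF ai frp fz])
  then have h1: "q1 = 0" using h0 h2 by (simp add: f_def)
  show "q0 = 0 \<and> q1 = 0 \<and> q2 = 0" using h0 h1 h2 by simp
qed

lemma Q101g:
  assumes ai: "alg_indep 6 (\<lambda>k. [A,B,C,D,E,F] ! k)"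
  shows "Q_indep [-1, E + F - 1, (1-B)/A * E + (1-C)/D * F - 1]"
  unfolding Q_indep3
proof (intro allI impI)
  fix q0 q1 q2 :: rat
  assume r: "of_rat q0 * -1 + of_rat q1 * (E + F - 1) + of_rat q2 * ((1-B)/A * E + (1-C)/D * F - 1) = 0"
  note nz = nzs[OF ai]
  define f where "f = (\<lambda>x::nat\<Rightarrow>complex. - of_rat q0 * (x 0 * x 3) + of_rat q1 * ((x 4 + x 5 - 1) * x 0 * x 3) + of_rat q2 * ((1 - x 1) * x 4 * x 3 + (1 - x 2) * x 5 * x 0 - x 0 * x 3))"
  have frp: "f \<in> rp" unfolding f_def by (intro rp_intros) auto
  have "f (\<lambda>k. [A,B,C,D,E,F] ! k) = A * D * (of_rat q0 * -1 + of_rat q1 * (E + F - 1) + of_rat q2 * ((1-B)/A * E + (1-C)/D * F - 1))"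
    using nz by (simp add: f_def field_simps)
  then have fz: "f (\<lambda>k. [A,B,C,D,E,F] ! k) = 0" using r by simp
  have "f (\<lambda>k. [0,0,0,1,1,0] ! k) = 0" by (rule rp_pt[OF ai frp fz])
  then have h2: "q2 = 0" by (simp add: f_def)
  have "f (\<lambda>k. [1,0,0,1,1,0] ! k) = 0" by (rule rp_pt[OF ai frp fz])
  then have h0: "q0 = 0" using h2 by (simp add: f_def)
  have "f (\<lambda>k. [1,0,0,1,1,1] ! k) = 0" by (rule rp_pt[OF ai frp fz])
  then have h1: "q1 = 0" using h0 h2 by (simp add: f_def)
  show "q0 = 0 \<and> q1 = 0 \<and> q2 = 0" using h0 h1 h2 by simp
qed

lemma lin2:
  fixes A B y1 y2 :: complex
  assumes "B*y1 + (1-A)*y2 = B" "(1-B)*y1 + A*y2 = A" "A + B \<noteq> 1" "A \<noteq> 0"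
  shows "y1 = A" "y2 = B"
proof -
  have "(A+B-1)*(y1-A) = A*(B*y1 + (1-A)*y2 - B) - (1-A)*((1-B)*y1 + A*y2 - A)"
    by (simp add: algebra_simps)
  also have "\<dots> = 0" using assms(1,2) by simp
  finally have "(A+B-1)*(y1-A) = 0" .
  with assms(3) show y1: "y1 = A" by simp
  have "A*(y2-B) = (1-B)*y1 + A*y2 - A" unfolding y1 by (simp add: algebra_simps)
  also have "\<dots> = 0" using assms(2) by simp
  finally have "A*(y2-B) = 0" .
  with assms(4) show "y2 = B" by simp
qed

lemma Q111g:
  assumes ai: "alg_indep 6 (\<lambda>k. [A,B,C,D,E,F] ! k)"
    and Mw: "Mm ((1-A)/B) ((1-B)/A) ((1-C)/D) ((1-D)/C) ((1-E)/F) ((1-F)/E) *v w = vector [1,1,1]"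
    and sn: "n2 + n3 = w$1 + w$2 + w$3 - 1"
    and pn: "n2 * n3 = w$1 * w$2 * w$3 * det (Mm ((1-A)/B) ((1-B)/A) ((1-C)/D) ((1-D)/C) ((1-E)/F) ((1-F)/E))"
  shows "Q_indep [-1, n2, n3]"
  unfolding Q_indep3
proof (intro allI impI)
  fix q0 q1 q2 :: rat
  assume r: "of_rat q0 * -1 + of_rat q1 * n2 + of_rat q2 * n3 = 0"
  note nz = nzs[OF ai]
  define z where "z = (\<lambda>k. [A,B,C,D,E,F] ! k)"
  have zv: "z 0 = A" "z 1 = B" "z 2 = C" "z 3 = D" "z 4 = E" "z 5 = F" by (simp_all add: z_def)
  define M where "M = Mm ((1-A)/B) ((1-B)/A) ((1-C)/D) ((1-D)/C) ((1-E)/F) ((1-F)/E)"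
  define w1 where "w1 = w$1"
  define w2 where "w2 = w$2"
  define w3 where "w3 = w$3"
  have m1: "w1 + (1-A)/B * w2 + (1-E)/F * w3 = 1"
    using arg_cong[OF Mw, of "\<lambda>u. u$1"] by (simp add: matrix_vector_mult_def sum_3 w1_def w2_def w3_def)
  have m2: "(1-B)/A * w1 + w2 + (1-C)/D * w3 = 1"
    using arg_cong[OF Mw, of "\<lambda>u. u$2"] by (simp add: matrix_vector_mult_def sum_3 w1_def w2_def w3_def)
  have m3: "(1-F)/E * w1 + (1-D)/C * w2 + w3 = 1"
    using arg_cong[OF Mw, of "\<lambda>u. u$3"] by (simp add: matrix_vector_mult_def sum_3 w1_def w2_def w3_def)
  have c1: "B*F*w1 + (1-A)*F*w2 + (1-E)*B*w3 = B*F" using m1 nz by (simp add: field_simps)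
  have c2: "(1-B)*D*w1 + A*D*w2 + (1-C)*A*w3 = A*D" using m2 nz by (simp add: field_simps)
  have c3: "(1-F)*C*w1 + (1-D)*E*w2 + C*E*w3 = C*E" using m3 nz by (simp add: field_simps)
  define K where "K = Kp z"
  have K0: "K \<noteq> 0" using nz(10) by (simp add: K_def z_def)
  have k1: "K * w1 = A*E*W1p z" using c1 c2 c3 unfolding K_def Kp_def W1p_def zv by algebra
  have k2: "K * w2 = B*C*W2p z" using c1 c2 c3 unfolding K_def Kp_def W2p_def zv by algebra
  have k3: "K * w3 = D*F*W3p z" using c1 c2 c3 unfolding K_def Kp_def W3p_def zv by algebra
  have dK: "det M * (A*B*C*D*E*F) = K"
    unfolding K_def Kp_def zv M_def using nz(1-6) by (simp add: det_3 field_simps) algebra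
  define N where "N = A*E*W1p z + B*C*W2p z + D*F*W3p z - K"
  have SK: "(n2 + n3) * K = N" unfolding sn N_def w1_def[symmetric] w2_def[symmetric] w3_def[symmetric]
    using k1 k2 k3 by (simp add: algebra_simps)
  have WP: "n2 * n3 * K^2 = W1p z * W2p z * W3p z"
  proof -
    have "(n2 * n3 * K^2) * (A*B*C*D*E*F) = w1*w2*w3 * (det M * (A*B*C*D*E*F)) * K^2"
      using pn unfolding M_def w1_def w2_def w3_def by (simp add: algebra_simps)
    also have "\<dots> = (K*w1)*(K*w2)*(K*w3)" unfolding dK by (simp add: algebra_simps power2_eq_square)
    also have "\<dots> = (W1p z * W2p z * W3p z) * (A*B*C*D*E*F)" unfolding k1 k2 k3 by (simp add: algebra_simps)
    finally show ?thesis using nz(1-6) by simp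
  qed
  define Np where "Np x = x 0 * x 4 * W1p x + x 1 * x 2 * W2p x + x 3 * x 5 * W3p x - Kp x" for x :: "nat \<Rightarrow> complex"
  have Npz: "Np z = N" by (simp add: Np_def N_def K_def z_def)
  show "q0 = 0 \<and> q1 = 0 \<and> q2 = 0"
  proof (cases "q1 = q2")
    case True
    define f where "f = (\<lambda>x::nat\<Rightarrow>complex. of_rat q1 * (x 0 * x 4 * W1p x + x 1 * x 2 * W2p x + x 3 * x 5 * W3p x - Kp x) - of_rat q0 * Kp x)"
    have frp: "f \<in> rp" unfolding f_def by (intro rp_intros Kp_rp W1p_rp W2p_rp W3p_rp) auto
    have "of_rat q1 * (n2 + n3) = of_rat q0" using r True by (simp add: algebra_simps)
    have "f z = K * (of_rat q1 * (n2 + n3) - of_rat q0)"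
      using SK unfolding f_def zv K_def N_def by algebra
    then have fz: "f (\<lambda>k. [A,B,C,D,E,F] ! k) = 0"
      using \<open>of_rat q1 * (n2 + n3) = of_rat q0\<close> by (simp add: z_def)
    have "f (\<lambda>k. [0,2,0,2,1,1] ! k) = 0" by (rule rp_pt[OF ai frp fz])
    then have h1: "q1 = 0" by (simp add: f_def Kp_def W1p_def W2p_def W3p_def)
    then have "q0 = 0" using \<open>of_rat q1 * (n2 + n3) = of_rat q0\<close> by simp
    then show ?thesis using h1 True by simp
  next
    case False
    define f where "f = (\<lambda>x::nat\<Rightarrow>complex. (of_rat q0 * Kp x - of_rat q2 * Np x) * ((of_rat q1 - of_rat q2) * Np x - (of_rat q0 * Kp x - of_rat q2 * Np x)) - (of_rat q1 - of_rat q2)^2 * (W1p x * W2p x * W3p x))"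
    have frp: "f \<in> rp" unfolding f_def Np_def by (intro rp_intros Kp_rp W1p_rp W2p_rp W3p_rp) auto
    have "f z = 0"
      using r SK WP unfolding f_def Npz K_def[symmetric] by algebra
    then have fz: "f (\<lambda>k. [A,B,C,D,E,F] ! k) = 0" by (simp add: z_def)
    have "f (\<lambda>k. [1,2,2,3,-1,3] ! k) = 0" by (rule rp_pt[OF ai frp fz])
    then have "(of_rat q1 - of_rat q2 :: complex)^2 * 288 = 0"
      by (simp add: f_def Np_def Kp_def W1p_def W2p_def W3p_def)
    then have "(of_rat q1 :: complex) = of_rat q2" by simp
    then have "q1 = q2" by simp
    with False show ?thesis by simp
  qed
qed

lemma detK:
  assumes ai: "alg_indep 6 (\<lambda>k. [A,B,C,D,E,F] ! k)"
  shows "det (Mm ((1-A)/B) ((1-B)/A) ((1-C)/D) ((1-D)/C) ((1-E)/F) ((1-F)/E)) \<noteq> 0"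
proof
  assume h: "det (Mm ((1-A)/B) ((1-B)/A) ((1-C)/D) ((1-D)/C) ((1-E)/F) ((1-F)/E)) = 0"
  note nz = nzs[OF ai]
  have "det (Mm ((1-A)/B) ((1-B)/A) ((1-C)/D) ((1-D)/C) ((1-E)/F) ((1-F)/E)) * (A*B*C*D*E*F)
        = Kp (\<lambda>k. [A,B,C,D,E,F] ! k)"
    unfolding Kp_def using nz(1-6) by (simp add: det_3 field_simps) algebra
  with h nz(10) show False by simp
qed

theorem proposition4p8:
  fixes p :: "complex^3 \<Rightarrow> complex^3" and g :: "complex^3^3"
  assumes "distinguished p g"
    and "g$1$3 = 0" and "g$2$1 = 0" and "g$3$2 = 0"
    and "alg_indep 6 (\<lambda>k. [g$1$1, g$1$2, g$2$2, g$2$3, g$3$1, g$3$3] ! k)"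
  shows "(\<forall>i. semi_invariant p (\<lambda>x. x $ i)) \<and> property_E p"
proof -
  define A where "A = g$1$1"
  define B where "B = g$1$2"
  define C where "C = g$2$2"
  define D where "D = g$2$3"
  define E where "E = g$3$1"
  define F where "F = g$3$3"
  have ai: "alg_indep 6 (\<lambda>k. [A,B,C,D,E,F] ! k)"
    using assms(5) by (simp add: A_def B_def C_def D_def E_def F_def)
  note nz = nzs[OF ai]
  have hq: "hom_quadratic p" and ide: "\<And>i. p (e i) = e i" and idg: "\<And>i. p (g$i) = g$i"
    using assms(1) unfolding distinguished_def idempotent_def by auto
  have g1: "g$1 = vector [A,B,0]" using assms(2) by (simp add: vec_eq_iff forall_3 A_def B_def)
  have g2: "g$2 = vector [0,C,D]" using assms(3) by (simp add: vec_eq_iff forall_3 C_def D_def)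
  have g3: "g$3 = vector [E,0,F]" using assms(4) by (simp add: vec_eq_iff forall_3 E_def F_def)
  define M where "M = Mm ((1-A)/B) ((1-B)/A) ((1-C)/D) ((1-D)/C) ((1-E)/F) ((1-F)/E)"
  have pf: "p = P0 M"
    unfolding M_def
    by (rule p_form[OF hq ide]) (use idg[of 1] idg[of 2] idg[of 3] g1 g2 g3 nz in auto)
  have semi: "semi_invariant p (\<lambda>x. x $ i)" for i
  proof -
    have lam: "(\<lambda>x. (M *v x)$i) = (\<lambda>x. M$i$1 * x$1 + M$i$2 * x$2 + M$i$3 * x$3)"
      by (simp add: fun_eq_iff matrix_vector_mult_def sum_3)
    have lamp: "(\<lambda>x. (M *v x)$i) \<in> polyfun" unfolding lam by (intro polyfun.intros)
    have fd: "frechet_derivative (\<lambda>x::complex^3. x $ i) (at x) = (\<lambda>h. h $ i)" for x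
      by (rule sym, rule frechet_derivative_at[OF bounded_linear_imp_has_derivative[OF bounded_linear_vec_nth]])
    have "\<exists>x y. (x::complex^3) $ i \<noteq> y $ i"
      by (rule exI[of _ 0], rule exI[of _ "axis i 1"]) simp
    moreover have "\<forall>x. lie_deriv p (\<lambda>x. x $ i) x = (M *v x)$i * x $ i"
      by (simp add: lie_deriv_def fd pf P0_def)
    ultimately show ?thesis unfolding semi_invariant_def
      using bexI[of "\<lambda>lam. \<forall>x. lie_deriv p (\<lambda>x. x $ i) x = lam x * x $ i", OF _ lamp] polyfun.coord
      by blast
  qed
  have propE: "property_E p"
    unfolding property_E_def
  proof (intro allI impI)
    fix v T l1 l2 l3
    assume H: "v \<noteq> 0 \<and> (\<exists>c. p v = c *s v) \<and> invertible T \<and> T *v v = e 1 \<and>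
      eigenvalues3 (matrix (frechet_derivative (poincare p T) (at 0))) l1 l2 l3"
    then obtain c where pv: "p v = c *s v" by blast
    have cj: "\<forall>t. (t - c) * det (mat t - matrix (frechet_derivative (poincare p T) (at 0)))
       = (t + c) * det (mat (t + c) - Jac M v)"
      using charJ[OF pf _ _ pv] H by blast
    have ev: "\<forall>t. det (mat t - matrix (frechet_derivative (poincare p T) (at 0))) = (t-l1)*(t-l2)*(t-l3)"
      using H unfolding eigenvalues3_def by blast
    have nd1: "(1-A)/B * ((1-B)/A) \<noteq> 1"
    proof
      assume "(1-A)/B * ((1-B)/A) = 1"
      then have "(1-A)*(1-B) = A*B" using nz by (simp add: field_simps)
      then have "A + B = 1" by algebra
      with nz(7) show False by simp
    qed
    have nd2: "(1-C)/D * ((1-D)/C) \<noteq> 1"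
    proof
      assume "(1-C)/D * ((1-D)/C) = 1"
      then have "(1-C)*(1-D) = C*D" using nz by (simp add: field_simps)
      then have "C + D = 1" by algebra
      with nz(8) show False by simp
    qed
    have nd3: "(1-E)/F * ((1-F)/E) \<noteq> 1"
    proof
      assume "(1-E)/F * ((1-F)/E) = 1"
      then have "(1-E)*(1-F) = E*F" using nz by (simp add: field_simps)
      then have "E + F = 1" by algebra
      with nz(9) show False by simp
    qed
    have q110: "Q_indep [-1, x1+x2-1, (1-F)/E*x1+(1-D)/C*x2-1]"
      if "x1 + (1-A)/B*x2 = 1" "(1-B)/A*x1 + x2 = 1" for x1 x2
    proof -
      have "B*x1 + (1-A)*x2 = B" "(1-B)*x1 + A*x2 = A" using that nz by (simp_all add: field_simps)
      from lin2[OF this nz(7) nz(1)] show ?thesis using Q110g[OF ai] by simp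
    qed
    have q011: "Q_indep [-1, x2+x3-1, (1-A)/B*x2+(1-E)/F*x3-1]"
      if "x2 + (1-C)/D*x3 = 1" "(1-D)/C*x2 + x3 = 1" for x2 x3
    proof -
      have "D*x2 + (1-C)*x3 = D" "(1-D)*x2 + C*x3 = C" using that nz by (simp_all add: field_simps)
      from lin2[OF this nz(8) nz(3)] show ?thesis using Q011g[OF ai] by simp
    qed
    have q101: "Q_indep [-1, x1+x3-1, (1-B)/A*x1+(1-C)/D*x3-1]"
      if "x1 + (1-E)/F*x3 = 1" "(1-F)/E*x1 + x3 = 1" for x1 x3
    proof -
      have "F*x1 + (1-E)*x3 = F" "(1-F)*x1 + E*x3 = E" using that nz by (simp_all add: field_simps)
      from lin2[OF this nz(9) nz(5)] show ?thesis using Q101g[OF ai] by simp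
    qed
    have "Q_indep [l1,l2,l3]"
      by (rule core[OF _ _ nd1 nd2 nd3 detK[OF ai] cj[unfolded M_def] ev Q100[OF ai] Q010[OF ai] Q001[OF ai]
            q110 q011 q101 Q111g[OF ai]])
         (use H pv pf M_def in auto)
    then show "Q_indep [l1, l2, l3] \<or>
        (Q_dim2 l1 l2 l3 \<and> (\<exists>m1 m2 m3 :: nat. m1 > 0 \<and> m2 > 0 \<and> m3 > 0
              \<and> of_nat m1 * l1 + of_nat m2 * l2 + of_nat m3 * l3 = 0))" by blast
  qed
  show ?thesis using semi propE by blast
qed

end
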